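(* Assume the Continuum Hypothesis. Let $X$ be a real Banach space with $\operatorname{dens} X = \operatorname{dens} X^* = \omega_1$. Then for every $\varepsilon > 0$, the closed unit ball $B_X$ contains an overcomplete set which is $(1-\varepsilon)$-separated, i.e. any two distinct elements $x, y$ of it satisfy $\|x-y\| \geq 1-\varepsilon$.
   Context: $\operatorname{dens}$ denotes the density character. A subset $S$ of a Banach space $X$ with $|S| = \operatorname{dens} X$ is called overcomplete if every subset $\Lambda \subseteq S$ with $|\Lambda| = |S|$ is linearly dense in $X$. *)

theory Defs
  imports "HOL-Analysis.Analysis"
begin

abbreviation omega1 :: "nat set rel" where
  "omega1 \<equiv> cardSuc natLeq"

definition card_eq :: "'a set \<Rightarrow> 'b rel \<Rightarrow> bool" where
  "card_eq A k \<longleftrightarrow> (card_of A, k) \<in> ordIso"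

definition card_ge :: "'a set \<Rightarrow> 'b rel \<Rightarrow> bool" where
  "card_ge A k \<longleftrightarrow> (k, card_of A) \<in> ordLeq"

definition dens_is :: "'a::metric_space set \<Rightarrow> 'b rel \<Rightarrow> bool" where
  "dens_is S k \<longleftrightarrow>
     (\<exists>D\<subseteq>S. S \<subseteq> closure D \<and> card_eq D k) \<and>
     (\<forall>D\<subseteq>S. S \<subseteq> closure D \<longrightarrow> card_ge D k)"

definition overcomplete :: "'b rel \<Rightarrow> 'a::real_normed_vector set \<Rightarrow> bool" where
  "overcomplete k S \<longleftrightarrow> card_eq S k \<and>
     (\<forall>L\<subseteq>S. (card_of L, card_of S) \<in> ordIso \<longrightarrow> closure (span L) = UNIV)"

end

theory Submission
  imports Defs "HOL-Library.Equipollence"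
begin

unbundle cardinal_syntax


lemma dist_sub_bound:
  fixes Z :: "'a::real_normed_vector set"
  assumes "subspace Z" "closed Z" "x0 \<notin> Z"
  obtains d where "d > 0" "\<And>z. z \<in> Z \<Longrightarrow> d \<le> norm (x0 - z)"
proof -
  have "0 \<in> Z" using assms(1) by (simp add: subspace_0)
  then have "infdist x0 Z > 0" using assms infdist_pos_not_in_closed by blast
  moreover have "\<And>z. z \<in> Z \<Longrightarrow> infdist x0 Z \<le> norm (x0 - z)"
    using infdist_le dist_norm by metis
  ultimately show ?thesis using that by blast
qed

lemma hahn_banach_sub:
  fixes Z :: "'a::real_normed_vector set"
  assumes sub: "subspace Z" and cl: "closed Z" and x0: "x0 \<notin> Z"
  shows "\<exists>f::'a \<Rightarrow>\<^sub>L real. (\<forall>z\<in>Z. f z = 0) \<and> f x0 = 1"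
proof -
  obtain d where d: "d > 0" "\<And>z. z \<in> Z \<Longrightarrow> d \<le> norm (x0 - z)"
    using dist_sub_bound[OF assms] by blast
  define K where "K = 1 / d"
  have K: "K > 0" using d by (simp add: K_def)
  define G0 where "G0 = {(z + t *\<^sub>R x0, t) | z t. z \<in> Z}"
  define A where "A = {G. G0 \<subseteq> G \<and> (\<forall>(x,a)\<in>G. \<forall>(y,b)\<in>G. (x+y,a+b)\<in>G)
     \<and> (\<forall>(x,a)\<in>G. \<forall>c. (c *\<^sub>R x, c*a) \<in> G) \<and> (\<forall>(x,a)\<in>G. a \<le> K * norm x)}"
  have G0dom: "t \<le> K * norm (z + t *\<^sub>R x0)" if "z \<in> Z" for z t
  proof (cases "t > 0")
    case True
    have "- (1/t) *\<^sub>R z \<in> Z" using sub that by (simp add: subspace_scale subspace_neg)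
    then have "d \<le> norm (x0 - (- (1/t) *\<^sub>R z))" using d by blast
    also have "x0 - (- (1/t) *\<^sub>R z) = (1/t) *\<^sub>R (z + t *\<^sub>R x0)"
      using True by (simp add: algebra_simps)
    finally have "d \<le> norm (z + t *\<^sub>R x0) / t" using True by simp
    then have "d * t \<le> norm (z + t *\<^sub>R x0)" using True by (simp add: field_simps)
    then show ?thesis using d True by (simp add: K_def field_simps)
  next
    case False
    then show ?thesis using K by (smt (verit) mult_nonneg_nonneg norm_ge_zero)
  qed
  have G0A: "G0 \<in> A"
  proof -
    have "(\<forall>(x,a)\<in>G0. \<forall>(y,b)\<in>G0. (x+y,a+b)\<in>G0)"
    proof (clarify)
      fix x a y b assume "(x,a) \<in> G0" "(y,b) \<in> G0"
      then obtain z z' where "z \<in> Z" "z' \<in> Z" "x = z + a *\<^sub>R x0" "y = z' + b *\<^sub>R x0"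
        by (auto simp: G0_def)
      moreover have "z + z' \<in> Z" using sub calculation by (simp add: subspace_add)
      ultimately have "(x+y, a+b) = ((z+z') + (a+b) *\<^sub>R x0, a+b) \<and> z+z' \<in> Z" by (simp add: algebra_simps)
      then show "(x+y, a+b) \<in> G0" unfolding G0_def by blast
    qed
    moreover have "(\<forall>(x,a)\<in>G0. \<forall>c. (c *\<^sub>R x, c*a) \<in> G0)"
    proof (clarify)
      fix x a c assume "(x,a) \<in> G0"
      then obtain z where "z \<in> Z" "x = z + a *\<^sub>R x0"
        by (auto simp: G0_def)
      moreover have "c *\<^sub>R z \<in> Z" using sub calculation by (simp add: subspace_scale)
      ultimately have "(c *\<^sub>R x, c*a) = (c *\<^sub>R z + (c*a) *\<^sub>R x0, c*a) \<and> c *\<^sub>R z \<in> Z" by (simp add: algebra_simps)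
      then show "(c *\<^sub>R x, c*a) \<in> G0" unfolding G0_def by blast
    qed
    moreover have "(\<forall>(x,a)\<in>G0. a \<le> K * norm x)" using G0dom by (auto simp: G0_def)
    ultimately show ?thesis by (auto simp: A_def)
  qed
  have "\<exists>M\<in>A. \<forall>X\<in>A. M \<subseteq> X \<longrightarrow> X = M"
  proof (rule Zorn_Lemma2, intro ballI)
    fix C assume C: "C \<in> chains A"
    show "\<exists>U\<in>A. \<forall>X\<in>C. X \<subseteq> U"
    proof (cases "C = {}")
      case True then show ?thesis using G0A by auto
    next
      case False
      have CA: "C \<subseteq> A" and ch: "\<And>X Y. X \<in> C \<Longrightarrow> Y \<in> C \<Longrightarrow> X \<subseteq> Y \<or> Y \<subseteq> X"
        using C by (auto simp: chains_def chain_subset_def)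
      have "\<Union>C \<in> A"
      proof -
        have "G0 \<subseteq> \<Union>C"
        proof -
          obtain X where X: "X \<in> C" using False by blast
          then have "G0 \<subseteq> X" using CA by (auto simp: A_def)
          then show ?thesis using X by blast
        qed
        moreover have "(\<forall>(x,a)\<in>\<Union>C. \<forall>(y,b)\<in>\<Union>C. (x+y,a+b)\<in>\<Union>C)"
        proof (clarify)
          fix x a y b X Y assume h: "(x,a) \<in> X" "X \<in> C" "(y,b) \<in> Y" "Y \<in> C"
          have XA: "X \<in> A" and YA: "Y \<in> A" using h CA by auto
          show "(x+y,a+b) \<in> \<Union>C"
          proof (cases "X \<subseteq> Y")
            case True
            then have "(x,a) \<in> Y" using h by blast
            then have "(x+y,a+b) \<in> Y" using YA h(3) unfolding A_def by blast
            then show ?thesis using h by blast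
          next
            case False
            then have "Y \<subseteq> X" using ch h by blast
            then have "(y,b) \<in> X" using h by blast
            then have "(x+y,a+b) \<in> X" using XA h(1) unfolding A_def by blast
            then show ?thesis using h by blast
          qed
        qed
        moreover have "(\<forall>(x,a)\<in>\<Union>C. \<forall>c. (c *\<^sub>R x, c*a) \<in> \<Union>C)"
        proof (clarify)
          fix x a c X assume h: "(x,a) \<in> X" "X \<in> C"
          then have "X \<in> A" using CA by auto
          then have "(c *\<^sub>R x, c*a) \<in> X" using h unfolding A_def by blast
          then show "(c *\<^sub>R x, c*a) \<in> \<Union>C" using h by blast
        qed
        moreover have "(\<forall>(x,a)\<in>\<Union>C. a \<le> K * norm x)"
        proof (clarify)
          fix x a X assume h: "(x,a) \<in> X" "X \<in> C"
          then have "X \<in> A" using CA by auto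
          then show "a \<le> K * norm x" using h unfolding A_def by blast
        qed
        ultimately show ?thesis by (simp add: A_def)
      qed
      then show ?thesis by auto
    qed
  qed
  then obtain M where MA: "M \<in> A" and Mmax: "\<And>X. X \<in> A \<Longrightarrow> M \<subseteq> X \<Longrightarrow> X = M" by blast
  have Madd: "\<And>x a y b. (x,a) \<in> M \<Longrightarrow> (y,b) \<in> M \<Longrightarrow> (x+y,a+b) \<in> M"
    and Mscale: "\<And>x a c. (x,a) \<in> M \<Longrightarrow> (c *\<^sub>R x, c*a) \<in> M"
    and Mdom: "\<And>x a. (x,a) \<in> M \<Longrightarrow> a \<le> K * norm x"
    and MG0: "G0 \<subseteq> M"
    using MA by (auto simp: A_def)
  have M00: "(0,0) \<in> M" using MG0 sub by (force simp: G0_def subspace_0 intro: exI[of _ 0])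
  have total: "\<exists>a. (y,a) \<in> M" for y
  proof (rule ccontr)
    assume ny: "\<not> (\<exists>a. (y,a) \<in> M)"
    define T where "T = {a - K * norm (x - y) | x a. (x,a) \<in> M}"
    have key: "a - K * norm (x - y) \<le> K * norm (x' + y) - a'" if "(x,a) \<in> M" "(x',a') \<in> M" for x a x' a'
    proof -
      have "a + a' \<le> K * norm (x + x')" using Mdom Madd that by blast
      also have "norm (x + x') \<le> norm (x - y) + norm (x' + y)"
        using norm_triangle_ineq[of "x - y" "x' + y"] by (simp add: algebra_simps)
      then have "K * norm (x + x') \<le> K * norm (x - y) + K * norm (x' + y)"
        using K by (simp add: distrib_left[symmetric] mult_left_mono)
      finally show ?thesis by simp
    qed
    define c where "c = Sup T"
    have Tne: "T \<noteq> {}" using M00 by (auto simp: T_def)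
    have Tbdd: "bdd_above T"
      using key[OF _ M00] by (auto simp: T_def bdd_above_def)
    have c1: "a - K * norm (x - y) \<le> c" if "(x,a) \<in> M" for x a
      unfolding c_def by (rule cSup_upper[OF _ Tbdd]) (use that in \<open>auto simp: T_def\<close>)
    have c2: "c \<le> K * norm (x' + y) - a'" if "(x',a') \<in> M" for x' a'
      unfolding c_def by (rule cSup_least[OF Tne]) (use key that in \<open>auto simp: T_def\<close>)
    define M' where "M' = {(x + t *\<^sub>R y, a + t * c) | x a t. (x,a) \<in> M}"
    have dom': "a + t * c \<le> K * norm (x + t *\<^sub>R y)" if "(x,a) \<in> M" for x a t
    proof -
      consider "t > 0" | "t < 0" | "t = 0" by linarith
      then show ?thesis
      proof cases
        case 1
        have m: "(inverse t *\<^sub>R x, inverse t * a) \<in> M" using Mscale that by blast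
        have e: "norm (inverse t *\<^sub>R x + y) = norm (x + t *\<^sub>R y) / t"
        proof -
          have "inverse t *\<^sub>R x + y = inverse t *\<^sub>R (x + t *\<^sub>R y)" using 1 by (simp add: algebra_simps)
          then show ?thesis using 1 by (simp add: divide_inverse_commute)
        qed
        have "c * t \<le> (K * norm (inverse t *\<^sub>R x + y) - inverse t * a) * t"
          using c2[OF m] 1 by (simp add: mult_right_mono)
        also have "\<dots> = K * norm (x + t *\<^sub>R y) - a" using e 1 by (simp add: field_simps)
        finally show ?thesis by (simp add: mult.commute)
      next
        case 2
        define s where "s = - t"
        have s: "s > 0" using 2 by (simp add: s_def)
        have m: "(inverse s *\<^sub>R x, inverse s * a) \<in> M" using Mscale that by blast
        have e: "norm (inverse s *\<^sub>R x - y) = norm (x + t *\<^sub>R y) / s"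
        proof -
          have "inverse s *\<^sub>R x - y = inverse s *\<^sub>R (x + t *\<^sub>R y)" using s by (simp add: s_def algebra_simps)
          then show ?thesis using s by (simp add: divide_inverse_commute)
        qed
        have "(inverse s * a - K * norm (inverse s *\<^sub>R x - y)) * s \<le> c * s"
          using c1[OF m] s by (simp add: mult_right_mono)
        moreover have "(inverse s * a - K * norm (inverse s *\<^sub>R x - y)) * s = a - K * norm (x + t *\<^sub>R y)"
          using e s by (simp add: field_simps)
        ultimately show ?thesis by (simp add: s_def algebra_simps)
      next
        case 3 then show ?thesis using Mdom that by simp
      qed
    qed
    have inM': "(x + t *\<^sub>R y, a + t * c) \<in> M'" if "(x,a) \<in> M" for x a t
      unfolding M'_def using that by blast
    have MM': "p \<in> M'" if "p \<in> M" for p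
      using inM'[of "fst p" "snd p" 0] that by simp
    have "M' \<in> A"
    proof -
      have "G0 \<subseteq> M'"
        using MG0 MM' by blast
      moreover have "(\<forall>(x,a)\<in>M'. \<forall>(y,b)\<in>M'. (x+y,a+b)\<in>M')"
      proof (clarify)
        fix u a v b assume "(u,a) \<in> M'" "(v,b) \<in> M'"
        then obtain x a1 t x' a1' t' where h: "(x,a1) \<in> M" "(x',a1') \<in> M"
          "u = x + t *\<^sub>R y" "a = a1 + t * c" "v = x' + t' *\<^sub>R y" "b = a1' + t' * c"
          unfolding M'_def by blast
        then have "(x+x', a1+a1') \<in> M" using Madd by blast
        from inM'[OF this, of "t+t'"] show "(u+v, a+b) \<in> M'" using h by (simp add: algebra_simps)
      qed
      moreover have "(\<forall>(x,a)\<in>M'. \<forall>r. (r *\<^sub>R x, r*a) \<in> M')"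
      proof (clarify)
        fix u a r assume "(u,a) \<in> M'"
        then obtain x a1 t where h: "(x,a1) \<in> M" "u = x + t *\<^sub>R y" "a = a1 + t * c"
          unfolding M'_def by blast
        then have "(r *\<^sub>R x, r*a1) \<in> M" using Mscale by blast
        from inM'[OF this, of "r*t"] show "(r *\<^sub>R u, r*a) \<in> M'" using h by (simp add: algebra_simps)
      qed
      moreover have "(\<forall>(x,a)\<in>M'. a \<le> K * norm x)" using dom' by (auto simp: M'_def)
      ultimately show ?thesis by (simp add: A_def)
    qed
    moreover have "M \<subseteq> M'"
      using MM' by blast
    ultimately have "M' = M" using Mmax by blast
    moreover have "(y, c) \<in> M'" using inM'[OF M00, of 1] by simp
    ultimately show False using ny by blast
  qed
  then obtain f where f: "\<And>y. (y, f y) \<in> M" by metis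
  have uniq: "a = b" if "(y,a) \<in> M" "(y,b) \<in> M" for y a b
  proof -
    have "(-1 *\<^sub>R y, -1 * b) \<in> M" using Mscale that(2) by blast
    then have "(y + -1 *\<^sub>R y, a + -1 * b) \<in> M" using Madd that(1) by blast
    then have "a - b \<le> 0" using Mdom by fastforce
    moreover have "(-1 *\<^sub>R y, -1 * a) \<in> M" using Mscale that(1) by blast
    then have "(y + -1 *\<^sub>R y, b + -1 * a) \<in> M" using Madd that(2) by blast
    then have "b - a \<le> 0" using Mdom by fastforce
    ultimately show ?thesis by simp
  qed
  have fadd: "f (x + y) = f x + f y" for x y using uniq[OF f Madd[OF f f]] .
  have fscale: "f (r *\<^sub>R x) = r * f x" for r x using uniq[OF f Mscale[OF f]] .
  have fbd: "norm (f x) \<le> norm x * K" for x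
  proof -
    have "f x \<le> K * norm x" using Mdom f by blast
    moreover have "f (-1 *\<^sub>R x) \<le> K * norm (-1 *\<^sub>R x)" using Mdom f by blast
    then have "- f x \<le> K * norm x" using fscale[of "-1" x] by simp
    ultimately show ?thesis by (simp add: abs_le_iff mult.commute)
  qed
  have bl: "bounded_linear f"
    by (rule bounded_linear_intro[of f K]) (use fadd fscale fbd in auto)
  have fZ: "f z = 0" if "z \<in> Z" for z
  proof -
    have "(z, 0) \<in> G0" using that unfolding G0_def by (auto intro!: exI[of _ z] exI[of _ 0])
    then show ?thesis using uniq[OF f] MG0 by blast
  qed
  have f1: "f x0 = 1"
  proof -
    have "(x0, 1) \<in> G0" using sub unfolding G0_def by (auto simp: subspace_0 intro!: exI[of _ 0] exI[of _ 1])
    then show ?thesis using uniq[OF f] MG0 by blast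
  qed
  show ?thesis
    by (rule exI[of _ "Blinfun f"]) (simp add: bounded_linear_Blinfun_apply[OF bl] fZ f1)
qed



lemma riesz:
  fixes Z :: "'a::real_normed_vector set"
  assumes sub: "subspace Z" and cl: "closed Z" and ne: "Z \<noteq> UNIV" and \<delta>: "0 < \<delta>" "\<delta> < 1"
  shows "\<exists>u. norm u = 1 \<and> (\<forall>z\<in>Z. 1 - \<delta> \<le> norm (u - z))"
proof -
  obtain x0 where x0: "x0 \<notin> Z" using ne by blast
  have Z0: "0 \<in> Z" using sub by (simp add: subspace_0)
  define d where "d = infdist x0 Z"
  have d: "d > 0" unfolding d_def using infdist_pos_not_in_closed[OF cl _ x0] Z0 by blast
  have "d < d / (1 - \<delta>)" using d \<delta> by (simp add: field_simps)
  moreover have Zne: "Z \<noteq> {}" using Z0 by blast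
  ultimately have "\<exists>z0\<in>Z. dist x0 z0 < d / (1 - \<delta>)"
  proof (rule_tac ccontr)
    assume lt: "d < d / (1 - \<delta>)" and "Z \<noteq> {}" and "\<not> (\<exists>z0\<in>Z. dist x0 z0 < d / (1 - \<delta>))"
    then have "\<forall>z\<in>Z. d / (1 - \<delta>) \<le> dist x0 z" by force
    then have "d / (1 - \<delta>) \<le> (INF z\<in>Z. dist x0 z)" using Zne by (intro cINF_greatest) auto
    then have "d / (1 - \<delta>) \<le> d" unfolding d_def using infdist_notempty[OF Zne] by simp
    then show False using lt by simp
  qed
  then obtain z0 where z0: "z0 \<in> Z" "dist x0 z0 < d / (1 - \<delta>)" by blast
  define r where "r = norm (x0 - z0)"
  have r0: "r > 0" using x0 z0 by (auto simp: r_def)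
  have rlt: "r < d / (1 - \<delta>)" using z0 by (simp add: r_def dist_norm)
  define u where "u = (1/r) *\<^sub>R (x0 - z0)"
  have "norm u = 1" using r0 by (simp add: u_def r_def)
  moreover have "1 - \<delta> \<le> norm (u - z)" if z: "z \<in> Z" for z
  proof -
    have "z0 + r *\<^sub>R z \<in> Z" using sub z z0 by (simp add: subspace_add subspace_scale)
    then have "d \<le> dist x0 (z0 + r *\<^sub>R z)" unfolding d_def by (rule infdist_le)
    also have "dist x0 (z0 + r *\<^sub>R z) = r * norm (u - z)"
    proof -
      have "x0 - (z0 + r *\<^sub>R z) = r *\<^sub>R (u - z)" using r0 by (simp add: u_def algebra_simps)
      then show ?thesis using r0 by (simp add: dist_norm)
    qed
    finally have "d \<le> r * norm (u - z)" .
    moreover have "(1 - \<delta>) * r < d" using rlt \<delta> by (simp add: field_simps)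
    ultimately have "(1 - \<delta>) * r \<le> norm (u - z) * r" by (simp add: mult.commute)
    then show ?thesis using r0 by simp
  qed
  ultimately show ?thesis by blast
qed

lemma avoid_kernels:
  fixes H :: "('a::banach \<Rightarrow>\<^sub>L real) set"
  assumes H: "countable H" "0 \<notin> H" and U: "open U" "U \<noteq> {}"
  shows "\<exists>x\<in>U. \<forall>h\<in>H. blinfun_apply h x \<noteq> 0"
proof (rule ccontr)
  assume "\<not> ?thesis"
  then have sub: "U \<subseteq> \<Union>((\<lambda>h. {x. blinfun_apply h x = 0}) ` H)" by blast
  have "interior (\<Union>((\<lambda>h. {x. blinfun_apply h x = 0}) ` H)) = {}"
  proof -
    have "euclidean interior_of \<Union>((\<lambda>h. {x. blinfun_apply h x = 0}) ` H) = {}"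
    proof (rule Baire_category_alt)
      show "completely_metrizable_space (euclidean :: 'a topology) \<or>
            locally_compact_space (euclidean :: 'a topology) \<and> regular_space (euclidean :: 'a topology)"
        using completely_metrizable_space_euclidean by blast
      show "countable ((\<lambda>h. {x. blinfun_apply h x = 0}) ` H)" using H by blast
      fix T assume "T \<in> (\<lambda>h. {x. blinfun_apply h x = 0}) ` H"
      then obtain h where h: "h \<in> H" "T = {x. blinfun_apply h x = 0}" by blast
      have "closed T" unfolding h(2) by (intro closed_Collect_eq continuous_intros)
      moreover have "interior T = {}"
      proof (rule ccontr)
        assume "interior T \<noteq> {}"
        then obtain c where "c \<in> interior T" by blast
        then obtain e where e: "e > 0" "ball c e \<subseteq> T" using open_contains_ball by (meson interior_subset open_interior subset_eq)
        have "c \<in> ball c e" using e by simp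
        then have hc: "h c = 0" using e h by blast
        have "h v = 0" for v
        proof -
          define k where "k = e / (2 * (norm v + 1))"
          have nz: "2 * (norm v + 1) > 0" by (smt (verit) norm_ge_zero)
          have k: "k > 0" using e nz unfolding k_def by simp
          have "norm (k *\<^sub>R v) < e"
          proof -
            have "norm (k *\<^sub>R v) = k * norm v" using k by simp
            also have "\<dots> < k * (2 * (norm v + 1))"
              using mult_strict_left_mono[OF _ k, of "norm v" "2 * (norm v + 1)"] by (smt (verit) norm_ge_zero)
            also have "\<dots> = e" unfolding k_def using nz by simp
            finally show ?thesis .
          qed
          then have "c + k *\<^sub>R v \<in> ball c e" by (simp add: dist_norm)
          then have "h (c + k *\<^sub>R v) = 0" using e h by blast
          then have "k * h v = 0" using hc by (simp add: blinfun.add_right blinfun.scaleR_right)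
          then show ?thesis using k by simp
        qed
        then have "h = 0" by (simp add: blinfun_eqI)
        then show False using h H by simp
      qed
      ultimately show "closedin euclidean T \<and> euclidean interior_of T = {}" by simp
    qed
    then show ?thesis by simp
  qed
  moreover have "U \<subseteq> interior (\<Union>((\<lambda>h. {x. blinfun_apply h x = 0}) ` H))"
    using sub U by (simp add: interior_maximal)
  ultimately show False using U by blast
qed



definition ratcomb :: "(rat \<times> 'a::real_normed_vector) list \<Rightarrow> 'a" where
  "ratcomb xs = sum_list (map (\<lambda>(q,y). of_rat q *\<^sub>R y) xs)"

lemma ratcomb_append: "ratcomb (xs @ ys) = ratcomb xs + ratcomb ys"
  by (simp add: ratcomb_def)

lemma ratcomb_scale: "ratcomb (map (\<lambda>(p,y). (q*p, y)) xs) = of_rat q *\<^sub>R ratcomb xs"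
proof (induction xs)
  case Nil then show ?case by (simp add: ratcomb_def)
next
  case (Cons p xs)
  obtain a y where p: "p = (a,y)" by (cases p)
  have "ratcomb (map (\<lambda>(p,y). (q*p, y)) (p # xs)) = of_rat (q*a) *\<^sub>R y + ratcomb (map (\<lambda>(p,y). (q*p, y)) xs)"
    by (simp add: ratcomb_def p)
  also have "\<dots> = of_rat q *\<^sub>R (of_rat a *\<^sub>R y + ratcomb xs)"
    using Cons.IH by (simp add: of_rat_mult scaleR_add_right)
  also have "of_rat a *\<^sub>R y + ratcomb xs = ratcomb (p # xs)" by (simp add: ratcomb_def p)
  finally show ?case .
qed

lemma countable_span_dense:
  fixes Y :: "'a::real_normed_vector set"
  assumes "countable Y"
  shows "\<exists>D. countable D \<and> span Y \<subseteq> closure D"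
proof -
  define D where "D = ratcomb ` lists (UNIV \<times> Y)"
  have "countable (lists (UNIV \<times> Y) :: (rat \<times> 'a) list set)"
    apply (rule countable_lists)
    apply (rule countable_SIGMA)
    apply simp
    using assms apply simp
    done
  then have cD: "countable D" unfolding D_def by (rule countable_image)
  have "ratcomb [] = (0::'a)" by (simp add: ratcomb_def)
  then have D0: "0 \<in> D" unfolding D_def by (metis image_eqI lists.Nil)
  have Dadd: "a + b \<in> D" if ab: "a \<in> D" "b \<in> D" for a b
  proof -
    obtain xs where xs2: "a = ratcomb xs" and xs1: "xs \<in> lists (UNIV \<times> Y)"
      using ab(1) unfolding D_def by (rule imageE)
    obtain ys where ys2: "b = ratcomb ys" and ys1: "ys \<in> lists (UNIV \<times> Y)"
      using ab(2) unfolding D_def by (rule imageE)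
    note xs = xs1 xs2 and ys = ys1 ys2
    have e: "a + b = ratcomb (xs @ ys)" using xs(2) ys(2) by (simp only: ratcomb_append)
    have "xs @ ys \<in> lists (UNIV \<times> Y)" using xs(1) ys(1) by simp
    then show ?thesis unfolding D_def e by (rule imageI)
  qed
  have Dscale: "of_rat q *\<^sub>R a \<in> D" if aD: "a \<in> D" for a q
  proof -
    obtain xs where xs2: "a = ratcomb xs" and xs1: "xs \<in> lists (UNIV \<times> Y)"
      using aD unfolding D_def by (rule imageE)
    note xs = xs1 xs2
    have "set (map (\<lambda>(p,y). (q*p, y)) xs) \<subseteq> UNIV \<times> Y" using xs(1) by auto
    then have m: "map (\<lambda>(p,y). (q*p, y)) xs \<in> lists (UNIV \<times> Y)" by (auto simp: in_lists_conv_set)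
    have e: "of_rat q *\<^sub>R a = ratcomb (map (\<lambda>(p,y). (q*p, y)) xs)" using xs(2) by (simp only: ratcomb_scale)
    show ?thesis unfolding D_def e using m by (rule imageI)
  qed
  have DY: "Y \<subseteq> D"
  proof
    fix y assume "y \<in> Y"
    then have l: "[(1,y)] \<in> lists (UNIV \<times> Y)" by simp
    have e: "y = ratcomb [(1,y)]" by (simp add: ratcomb_def)
    show "y \<in> D" unfolding D_def by (subst e) (rule imageI[OF l])
  qed
  have "subspace (closure D)"
  proof (unfold subspace_def, intro conjI ballI allI)
    show "0 \<in> closure D" using D0 closure_subset by blast
  next
    fix x y assume x: "x \<in> closure D" and y: "y \<in> closure D"
    show "x + y \<in> closure D"
    proof (unfold closure_approachable, intro allI impI)
      fix e :: real assume e: "e > 0"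
      have "\<forall>e>0. \<exists>z\<in>D. dist z x < e" "\<forall>e>0. \<exists>z\<in>D. dist z y < e"
        using x y by (simp_all add: closure_approachable)
      moreover have "e/2 > 0" using e by simp
      ultimately obtain a b where a: "a \<in> D" "dist a x < e/2" and b: "b \<in> D" "dist b y < e/2" by blast
      have eq: "(a + b) - (x + y) = (a - x) + (b - y)" by (simp add: algebra_simps)
      have "dist (a + b) (x + y) \<le> dist a x + dist b y"
        unfolding dist_norm eq by (rule norm_triangle_ineq)
      then show "\<exists>z\<in>D. dist z (x + y) < e" using a b Dadd by (intro bexI[of _ "a+b"]) auto
    qed
  next
    fix c :: real and x assume x: "x \<in> closure D"
    show "c *\<^sub>R x \<in> closure D"
    proof (unfold closure_approachable, intro allI impI)
      fix e :: real assume e: "e > 0"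
      define e1 where "e1 = e / (2 * (norm x + 1))"
      have e1: "e1 > 0" using e unfolding e1_def by (smt (verit) divide_pos_pos norm_ge_zero)
      obtain r where r: "r \<in> \<rat>" "c < r" "r < c + e1" using Rats_dense_in_real[of c "c + e1"] e1 by auto
      obtain q where q: "r = of_rat q" using r(1) Rats_cases by blast
      define e2 where "e2 = e / (2 * (\<bar>r\<bar> + 1))"
      have e2: "e2 > 0" using e by (simp add: e2_def)
      have "\<forall>e>0. \<exists>z\<in>D. dist z x < e" using x by (simp add: closure_approachable)
      then obtain a where a: "a \<in> D" "dist a x < e2" using e2 by blast
      have tri: "dist (r *\<^sub>R a) (c *\<^sub>R x) \<le> norm (r *\<^sub>R (a - x)) + norm ((r - c) *\<^sub>R x)"
      proof -
        have eq: "r *\<^sub>R a - c *\<^sub>R x = r *\<^sub>R (a - x) + (r - c) *\<^sub>R x" by (simp add: algebra_simps)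
        show ?thesis unfolding dist_norm eq by (rule norm_triangle_ineq)
      qed
      have n1: "norm (r *\<^sub>R (a - x)) < (\<bar>r\<bar> + 1) * e2"
      proof -
        have "norm (r *\<^sub>R (a - x)) = \<bar>r\<bar> * norm (a - x)" by simp
        also have "\<dots> \<le> \<bar>r\<bar> * e2" using a(2) by (intro mult_left_mono) (auto simp: dist_norm)
        also have "\<dots> < (\<bar>r\<bar> + 1) * e2" using e2 by (simp add: distrib_right)
        finally show ?thesis .
      qed
      have n1': "(\<bar>r\<bar> + 1) * e2 = e / 2" unfolding e2_def by (simp add: field_simps)
      have n2: "norm ((r - c) *\<^sub>R x) \<le> e1 * (norm x + 1)"
      proof -
        have "norm ((r - c) *\<^sub>R x) = (r - c) * norm x" using r by simp
        also have "\<dots> \<le> e1 * (norm x + 1)" using r e1 by (intro mult_mono) auto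
        finally show ?thesis .
      qed
      have nx: "norm x + 1 > 0" by (smt (verit) norm_ge_zero)
      have n2': "e1 * (norm x + 1) = e / 2" unfolding e1_def using nx by (simp add: field_simps)
      have "dist (r *\<^sub>R a) (c *\<^sub>R x) < e" using tri n1 n1' n2 n2' e by linarith
      moreover have "r *\<^sub>R a \<in> D" using Dscale a q by simp
      ultimately show "\<exists>z\<in>D. dist z (c *\<^sub>R x) < e" by blast
    qed
  qed
  then have sc: "subspace (closure D)" .
  have Yc: "Y \<subseteq> closure D" using DY closure_subset by (rule subset_trans)
  have "span Y \<subseteq> closure D" by (rule span_minimal[OF Yc sc])
  with cD show ?thesis by (intro exI[of _ D] conjI)
qed



lemma countable_iff_natLeq: "countable A \<longleftrightarrow> |A| \<le>o natLeq"
proof -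
  have "countable A \<longleftrightarrow> |A| \<le>o |UNIV::nat set|"
    unfolding countable_def card_of_ordLeq[symmetric] by auto
  moreover have iso: "|UNIV::nat set| =o natLeq" by (rule card_of_nat)
  moreover have iso2: "natLeq =o |UNIV::nat set|" using iso by (rule ordIso_symmetric)
  ultimately show ?thesis using ordLeq_ordIso_trans by blast
qed

lemma natLeq_less_omega1: "natLeq <o omega1"
  by (rule cardSuc_greater[OF natLeq_Card_order])

lemma uncountable_of_ge:
  assumes "omega1 \<le>o |A|" shows "\<not> countable A"
proof
  assume "countable A"
  then have "|A| \<le>o natLeq" by (simp add: countable_iff_natLeq)
  then have "omega1 \<le>o natLeq" using ordLeq_transitive[OF assms] by blast
  then show False using not_ordLess_ordLeq[OF natLeq_less_omega1] by blast
qed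

lemma countable_of_less:
  assumes "|A| <o omega1" shows "countable A"
proof (rule ccontr)
  assume "\<not> countable A"
  then have "\<not> |A| \<le>o natLeq" by (simp add: countable_iff_natLeq)
  then have "natLeq <o |A|"
    by (rule iffD1[OF not_ordLeq_iff_ordLess[OF natLeq_Well_order card_of_Well_order]])
  then have "omega1 \<le>o |A|" by (rule iffD1[OF cardSuc_ordLess_ordLeq[OF natLeq_Card_order card_of_Card_order]])
  then show False by (rule notE[OF not_ordLess_ordLeq[OF assms]])
qed

lemma dens_ge:
  assumes "dens_is (UNIV :: 'b::metric_space set) omega1"
  shows "omega1 \<le>o |UNIV :: 'b set|"
proof -
  have "\<forall>D\<subseteq>(UNIV :: 'b set). UNIV \<subseteq> closure D \<longrightarrow> card_ge D omega1"
    using assms unfolding dens_is_def by blast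
  then have "card_ge (UNIV :: 'b set) omega1" by simp
  then show ?thesis unfolding card_ge_def by simp
qed

lemma nonsep:
  assumes "dens_is (UNIV :: 'b::metric_space set) omega1" "countable (D :: 'b set)"
  shows "\<not> UNIV \<subseteq> closure D"
proof
  assume "UNIV \<subseteq> closure D"
  moreover have "\<forall>D\<subseteq>(UNIV :: 'b set). UNIV \<subseteq> closure D \<longrightarrow> card_ge D omega1"
    using assms(1) unfolding dens_is_def by blast
  ultimately have "card_ge D omega1" by simp
  then have "omega1 \<le>o |D|" unfolding card_ge_def by simp
  then show False using uncountable_of_ge assms(2) by blast
qed

lemma dens_le:
  assumes CH: "card_eq (UNIV :: real set) omega1"
    and dens: "dens_is (UNIV :: 'b::metric_space set) omega1"
  shows "|UNIV :: 'b set| \<le>o omega1"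
proof -
  obtain D :: "'b set" where Dd: "UNIV \<subseteq> closure D" and Dc: "|D| =o omega1"
    using dens by (auto simp: dens_is_def card_eq_def)
  have R: "|UNIV :: real set| =o omega1" using CH by (simp add: card_eq_def)
  have "|D| =o |UNIV :: real set|" by (rule ordIso_transitive[OF Dc ordIso_symmetric[OF R]])
  then have "\<exists>f. bij_betw f D (UNIV :: real set)" by (simp only: card_of_ordIso[symmetric])
  then obtain \<iota> :: "'b \<Rightarrow> real" where "bij_betw \<iota> D UNIV" by blast
  then have \<iota>: "inj_on \<iota> D" by (simp add: bij_betw_def)
  have "\<forall>b. \<exists>s. (\<forall>n. s n \<in> D) \<and> s \<longlonglongrightarrow> b"
  proof
    fix b :: 'b have "b \<in> closure D" using Dd by blast
    then show "\<exists>s. (\<forall>n. s n \<in> D) \<and> s \<longlonglongrightarrow> b" by (simp add: closure_sequential)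
  qed
  then obtain sq where sq: "\<And>b n. sq b n \<in> D" "\<And>b. sq b \<longlonglongrightarrow> b" by metis
  obtain \<beta> :: "nat set \<Rightarrow> real" where \<beta>: "bij \<beta>"
    using nat_sets_eqpoll_reals by (auto simp: eqpoll_def)
  define \<Psi> :: "(nat \<Rightarrow> nat set) \<Rightarrow> nat set" where
    "\<Psi> g = {prod_encode (n,k) | n k. k \<in> g n}" for g
  have \<Psi>: "inj \<Psi>"
  proof (rule injI)
    fix g h assume e: "\<Psi> g = \<Psi> h"
    have "k \<in> g n \<longleftrightarrow> prod_encode (n,k) \<in> \<Psi> g" for g n k
      by (auto simp: \<Psi>_def dest: inj_onD[OF inj_prod_encode, of "(n,k)", simplified])
    then have "k \<in> g n \<longleftrightarrow> k \<in> h n" for n k using e by metis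
    then show "g = h" by blast
  qed
  define F where "F b = \<beta> (\<Psi> (\<lambda>n. inv \<beta> (\<iota> (sq b n))))" for b
  have "inj F"
  proof (rule injI)
    fix a b assume "F a = F b"
    then have "\<Psi> (\<lambda>n. inv \<beta> (\<iota> (sq a n))) = \<Psi> (\<lambda>n. inv \<beta> (\<iota> (sq b n)))"
      using \<beta> by (simp add: F_def bij_def inj_eq)
    then have "(\<lambda>n. inv \<beta> (\<iota> (sq a n))) = (\<lambda>n. inv \<beta> (\<iota> (sq b n)))" using \<Psi> by (simp add: inj_eq)
    moreover have "inj (inv \<beta>)" using \<beta> bij_imp_bij_inv bij_is_inj by blast
    ultimately have "\<iota> (sq a n) = \<iota> (sq b n)" for n
      by (meson injD fun_cong)
    then have "sq a n = sq b n" for n using \<iota> sq(1) by (meson inj_onD)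
    then have "sq a = sq b" by blast
    then show "a = b" using sq(2) LIMSEQ_unique by metis
  qed
  then have "\<exists>f. inj_on f (UNIV :: 'b set) \<and> f ` UNIV \<subseteq> (UNIV :: real set)" by blast
  then have "|UNIV :: 'b set| \<le>o |UNIV :: real set|" by (simp only: card_of_ordLeq)
  then show ?thesis by (rule ordLeq_ordIso_trans[OF _ R])
qed



lemma subspace_closure_sub:
  fixes S :: "'a::real_normed_vector set"
  assumes "subspace S" shows "subspace (closure S)"
proof (unfold subspace_def, intro conjI ballI allI)
  have "0 \<in> S" using assms by (rule subspace_0)
  then show "0 \<in> closure S" using closure_subset by blast
next
  fix x y assume "x \<in> closure S" "y \<in> closure S"
  then obtain s t where s: "\<And>n. s n \<in> S" "s \<longlonglongrightarrow> x" and t: "\<And>n. t n \<in> S" "t \<longlonglongrightarrow> y"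
    unfolding closure_sequential by metis
  have h1: "(\<lambda>n. s n + t n) \<longlonglongrightarrow> x + y" using s t by (intro tendsto_add)
  have h2: "\<forall>n. s n + t n \<in> S" using s t assms by (simp add: subspace_add)
  show "x + y \<in> closure S" unfolding closure_sequential using h1 h2 by (intro exI[of _ "\<lambda>n. s n + t n"]) simp
next
  fix c :: real and x assume "x \<in> closure S"
  then obtain s where s: "\<And>n. s n \<in> S" "s \<longlonglongrightarrow> x"
    unfolding closure_sequential by metis
  have h1: "(\<lambda>n. c *\<^sub>R s n) \<longlonglongrightarrow> c *\<^sub>R x" using s by (intro tendsto_scaleR tendsto_const)
  have h2: "\<forall>n. c *\<^sub>R s n \<in> S" using s assms by (simp add: subspace_scale)
  show "c *\<^sub>R x \<in> closure S" unfolding closure_sequential using h1 h2 by (intro exI[of _ "\<lambda>n. c *\<^sub>R s n"]) simp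
qed

lemma good_point:
  fixes Y :: "'a::banach set" and H :: "('a \<Rightarrow>\<^sub>L real) set"
  assumes densX: "dens_is (UNIV :: 'a set) omega1"
    and Y: "countable Y" and H: "countable H" "0 \<notin> H" and eps: "0 < \<epsilon>" "\<epsilon> < 1"
  shows "\<exists>x. norm x \<le> 1 \<and> (\<forall>y\<in>Y. 1 - \<epsilon> \<le> norm (x - y)) \<and> (\<forall>h\<in>H. h x \<noteq> 0)"
proof -
  define Z where "Z = closure (span Y)"
  have subZ: "subspace Z" unfolding Z_def by (intro subspace_closure_sub subspace_span)
  have clZ: "closed Z" unfolding Z_def by simp
  obtain D where D: "countable D" "span Y \<subseteq> closure D" using countable_span_dense[OF Y] by blast
  have "Z \<subseteq> closure D" unfolding Z_def using D(2) by (metis closure_closure closure_mono)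
  then have neZ: "Z \<noteq> UNIV" using nonsep[OF densX D(1)] by blast
  define \<delta> where "\<delta> = \<epsilon> / 3"
  have \<delta>: "0 < \<delta>" "\<delta> < 1" using eps by (auto simp: \<delta>_def)
  obtain u where u: "norm u = 1" "\<And>z. z \<in> Z \<Longrightarrow> 1 - \<delta> \<le> norm (u - z)"
    using riesz[OF subZ clZ neZ \<delta>] by blast
  define c where "c = (1 - \<delta>) *\<^sub>R u"
  obtain x where x: "x \<in> ball c \<delta>" "\<forall>h\<in>H. h x \<noteq> 0"
    using avoid_kernels[OF H, of "ball c \<delta>"] \<delta> by auto
  have xc: "norm (x - c) < \<delta>" using x(1) by (simp add: dist_norm norm_minus_commute)
  have "norm x \<le> 1"
  proof -
    have "norm x \<le> norm c + norm (x - c)" by (metis add.commute diff_add_cancel norm_triangle_ineq)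
    also have "norm c = 1 - \<delta>" using u \<delta> by (simp add: c_def)
    finally show ?thesis using xc by simp
  qed
  moreover have "1 - \<epsilon> \<le> norm (x - y)" if y: "y \<in> Y" for y
  proof -
    have yZ: "y \<in> Z" unfolding Z_def using y closure_subset span_base by blast
    have "(1 / (1 - \<delta>)) *\<^sub>R y \<in> Z" using subZ yZ by (simp add: subspace_scale)
    then have "1 - \<delta> \<le> norm (u - (1 / (1 - \<delta>)) *\<^sub>R y)" using u by blast
    moreover have "c - y = (1 - \<delta>) *\<^sub>R (u - (1 / (1 - \<delta>)) *\<^sub>R y)"
      using \<delta> by (simp add: c_def algebra_simps)
    ultimately have "(1 - \<delta>) * (1 - \<delta>) \<le> norm (c - y)"
    proof -
      assume h1: "1 - \<delta> \<le> norm (u - (1 / (1 - \<delta>)) *\<^sub>R y)" and h2: "c - y = (1 - \<delta>) *\<^sub>R (u - (1 / (1 - \<delta>)) *\<^sub>R y)"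
      have "norm (c - y) = (1 - \<delta>) * norm (u - (1 / (1 - \<delta>)) *\<^sub>R y)"
        unfolding h2 using \<delta> by simp
      moreover have "(1 - \<delta>) * (1 - \<delta>) \<le> (1 - \<delta>) * norm (u - (1 / (1 - \<delta>)) *\<^sub>R y)"
        using h1 \<delta> by (intro mult_left_mono) auto
      ultimately show ?thesis by simp
    qed
    moreover have "norm (c - y) \<le> norm (x - y) + norm (x - c)"
      by (metis diff_add_cancel diff_diff_eq2 norm_minus_commute norm_triangle_ineq4 add.commute)
    ultimately have "(1 - \<delta>) * (1 - \<delta>) - \<delta> \<le> norm (x - y)" using xc by linarith
    moreover have "1 - \<epsilon> \<le> (1 - \<delta>) * (1 - \<delta>) - \<delta>" using \<delta> by (simp add: \<delta>_def algebra_simps)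
    ultimately show ?thesis by linarith
  qed
  ultimately show ?thesis using x(2) by blast
qed


theorem main_lt1:
  fixes \<epsilon> :: real
  assumes CH: "card_eq (UNIV :: real set) omega1"
    and densX: "dens_is (UNIV :: 'a::banach set) omega1"
    and densXstar: "dens_is (UNIV :: ('a \<Rightarrow>\<^sub>L real) set) omega1"
    and eps: "0 < \<epsilon>" "\<epsilon> < 1"
  shows "\<exists>S :: 'a set. S \<subseteq> cball 0 1 \<and> overcomplete omega1 S \<and>
           (\<forall>x\<in>S. \<forall>y\<in>S. x \<noteq> y \<longrightarrow> norm (x - y) \<ge> 1 - \<epsilon>)"
proof -
  define W where "W = |UNIV :: ('a \<Rightarrow>\<^sub>L real) set|"
  have Wo: "wo_rel W" unfolding W_def wo_rel_def by (rule card_of_Well_order)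
  have FW: "Field W = UNIV" unfolding W_def by (rule Field_card_of)
  have WC: "Card_order W" unfolding W_def by (rule card_of_Card_order)
  have Wiso: "W =o omega1" unfolding W_def
    unfolding ordIso_iff_ordLeq using dens_le[OF CH densXstar] dens_ge[OF densXstar] by (rule conjI)
  have tot: "(a,b) \<in> W \<or> (b,a) \<in> W" for a b
    using wo_rel.TOTALS[OF Wo] FW by blast
  have antis: "a = b" if "(a,b) \<in> W" "(b,a) \<in> W" for a b
    using wo_rel.ANTISYM[OF Wo] that by (auto simp: antisym_def)
  have cntU: "countable (underS W d)" for d
  proof -
    have "|underS W d| <o W" by (rule card_of_underS[OF WC]) (simp add: FW)
    then have "|underS W d| <o omega1" by (rule ordLess_ordIso_trans[OF _ Wiso])
    then show ?thesis by (rule countable_of_less)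
  qed
  define Q where "Q G d x \<longleftrightarrow> norm x \<le> 1 \<and> (\<forall>h\<in>underS W d. h \<noteq> 0 \<longrightarrow> blinfun_apply h x \<noteq> 0) \<and> (\<forall>h\<in>underS W d. h \<in> Domain G)"
    for G :: "(('a \<Rightarrow>\<^sub>L real) \<times> 'a) set" and d x
  define R where "R d x d' x' \<longleftrightarrow> (d \<noteq> d' \<longrightarrow> 1 - \<epsilon> \<le> norm (x - x')) \<and> (d = d' \<longrightarrow> x = x')"
    for d d' :: "'a \<Rightarrow>\<^sub>L real" and x x' :: 'a
  define Ok where "Ok G \<longleftrightarrow> (\<forall>d x. (d,x) \<in> G \<longrightarrow> Q G d x) \<and> (\<forall>d x d' x'. (d,x) \<in> G \<longrightarrow> (d',x') \<in> G \<longrightarrow> R d x d' x')"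
    for G :: "(('a \<Rightarrow>\<^sub>L real) \<times> 'a) set"
  have OkI: "Ok G" if "\<And>d x. (d,x) \<in> G \<Longrightarrow> Q G d x" "\<And>d x d' x'. (d,x) \<in> G \<Longrightarrow> (d',x') \<in> G \<Longrightarrow> R d x d' x'" for G
    unfolding Ok_def using that by blast
  have OkQ: "Q G d x" if "Ok G" "(d,x) \<in> G" for G d x
    using that unfolding Ok_def by blast
  have OkR: "R d x d' x'" if "Ok G" "(d,x) \<in> G" "(d',x') \<in> G" for G d x d' x'
    using that unfolding Ok_def by blast
  have Qmono: "Q G' d x" if "Q G d x" "G \<subseteq> G'" for G G' d x
    using that unfolding Q_def by blast
  define A where "A = Collect Ok"
  have "\<exists>M\<in>A. \<forall>X\<in>A. M \<subseteq> X \<longrightarrow> X = M"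
  proof (rule Zorn_Lemma, intro ballI)
    fix C assume C: "C \<in> chains A"
    have CA: "\<And>X. X \<in> C \<Longrightarrow> Ok X" using C by (auto simp: chains_def A_def)
    have ch: "\<And>X Y. X \<in> C \<Longrightarrow> Y \<in> C \<Longrightarrow> X \<subseteq> Y \<or> Y \<subseteq> X"
      using C by (auto simp: chains_def chain_subset_def)
    have one: "Q (\<Union>C) d x" if dxC: "(d,x) \<in> \<Union>C" for d x
    proof -
      obtain X where X: "X \<in> C" "(d,x) \<in> X" using dxC by blast
      have "Q X d x" using OkQ[OF CA[OF X(1)] X(2)] .
      moreover have "X \<subseteq> \<Union>C" using X by blast
      ultimately show ?thesis by (rule Qmono)
    qed
    have two: "R d x d' x'" if dxC: "(d,x) \<in> \<Union>C" "(d',x') \<in> \<Union>C" for d x d' x'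
    proof -
      obtain X where X: "X \<in> C" "(d,x) \<in> X" using dxC by blast
      obtain Y where Y: "Y \<in> C" "(d',x') \<in> Y" using dxC by blast
      have "X \<subseteq> Y \<or> Y \<subseteq> X" by (rule ch[OF X(1) Y(1)])
      then show ?thesis
      proof
        assume "X \<subseteq> Y"
        then have "(d,x) \<in> Y" using X(2) by (rule subsetD)
        then show ?thesis using OkR[OF CA[OF Y(1)] _ Y(2)] by blast
      next
        assume "Y \<subseteq> X"
        then have "(d',x') \<in> X" using Y(2) by (rule subsetD)
        then show ?thesis using OkR[OF CA[OF X(1)] X(2)] by blast
      qed
    qed
    have "Ok (\<Union>C)" by (rule OkI) (use one two in blast)+
    then show "\<Union>C \<in> A" by (simp add: A_def)
  qed
  then obtain M where MA0: "M \<in> A" and Mmax0: "\<forall>X\<in>A. M \<subseteq> X \<longrightarrow> X = M" by (rule bexE)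
  have MA: "Ok M" using MA0 by (simp add: A_def)
  have Mmax: "X = M" if "Ok X" "M \<subseteq> X" for X
    using Mmax0 that by (simp add: A_def)
  have M1all: "norm x \<le> 1 \<and> (\<forall>h\<in>underS W d. h \<noteq> 0 \<longrightarrow> blinfun_apply h x \<noteq> 0) \<and> (\<forall>h\<in>underS W d. h \<in> Domain M)"
    if dxM: "(d,x) \<in> M" for d x
    using OkQ[OF MA dxM] unfolding Q_def .
  have M1: "norm x \<le> 1" "\<And>h. h \<in> underS W d \<Longrightarrow> h \<noteq> 0 \<Longrightarrow> blinfun_apply h x \<noteq> 0"
    "\<And>h. h \<in> underS W d \<Longrightarrow> h \<in> Domain M" if dxM: "(d,x) \<in> M" for d x
    using M1all[OF dxM] by auto
  have M2all: "(d \<noteq> d' \<longrightarrow> 1 - \<epsilon> \<le> norm (x - x')) \<and> (d = d' \<longrightarrow> x = x')"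
    if dxM: "(d,x) \<in> M" "(d',x') \<in> M" for d x d' x'
    using OkR[OF MA dxM] unfolding R_def .
  have M2: "d \<noteq> d' \<Longrightarrow> 1 - \<epsilon> \<le> norm (x - x')" "d = d' \<Longrightarrow> x = x'"
    if dxM: "(d,x) \<in> M" "(d',x') \<in> M" for d x d' x'
    using M2all[OF dxM] by auto
  have domM: "Domain M = UNIV"
  proof (rule ccontr)
    assume "Domain M \<noteq> UNIV"
    define B where "B = UNIV - Domain M"
    have Bne: "B \<noteq> {}" using \<open>Domain M \<noteq> UNIV\<close> by (auto simp: B_def)
    define f0 where "f0 = wo_rel.minim W B"
    have BF: "B \<subseteq> Field W" using FW by simp
    have f0B: "f0 \<in> B" unfolding f0_def by (rule wo_rel.minim_in[OF Wo BF Bne])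
    have f0least: "(f0, b) \<in> W" if bB: "b \<in> B" for b
      unfolding f0_def by (rule wo_rel.minim_least[OF Wo BF bB])
    have below: "h \<in> Domain M" if "h \<in> underS W f0" for h
    proof (rule ccontr)
      assume "h \<notin> Domain M"
      then have "(f0, h) \<in> W" using f0least by (auto simp: B_def)
      moreover have "(h, f0) \<in> W" "h \<noteq> f0" using that by (auto simp: underS_def)
      ultimately show False using antis by blast
    qed
    have domsub: "Domain M \<subseteq> underS W f0"
    proof
      fix d assume d: "d \<in> Domain M"
      then obtain x where dx: "(d,x) \<in> M" by blast
      have ne: "d \<noteq> f0" using d f0B by (auto simp: B_def)
      show "d \<in> underS W f0"
      proof (cases "(d, f0) \<in> W")
        case True then show ?thesis using ne by (simp add: underS_def)
      next
        case False
        then have "(f0, d) \<in> W" using tot by blast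
        then have "f0 \<in> underS W d" using ne by (simp add: underS_def)
        then have "f0 \<in> Domain M" using M1(3)[OF dx] by blast
        then show ?thesis using f0B by (simp add: B_def)
      qed
    qed
    define g where "g d = (SOME x. (d,x) \<in> M)" for d
    have gM: "(d, g d) \<in> M" if dD: "d \<in> Domain M" for d
    proof -
      from dD obtain x where "(d,x) \<in> M" by (rule DomainE)
      then show ?thesis unfolding g_def by (rule someI)
    qed
    have "Range M \<subseteq> g ` Domain M"
    proof
      fix x assume "x \<in> Range M"
      then obtain d where dx: "(d,x) \<in> M" by blast
      have "d \<in> Domain M" using dx by (rule DomainI)
      then have "(d, g d) \<in> M" by (rule gM)
      then have "x = g d" using M2(2)[OF dx] by blast
      then show "x \<in> g ` Domain M" using dx by blast
    qed
    moreover have "countable (Domain M)" by (rule countable_subset[OF domsub cntU])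
    ultimately have cR: "countable (Range M)" by (rule countable_subset[OF _ countable_image])
    define H where "H = underS W f0 - {0}"
    have cH: "countable H" "0 \<notin> H" using cntU by (auto simp: H_def)
    obtain x where x: "norm x \<le> 1" "\<And>y. y \<in> Range M \<Longrightarrow> 1 - \<epsilon> \<le> norm (x - y)"
        "\<And>h. h \<in> H \<Longrightarrow> blinfun_apply h x \<noteq> 0"
      using good_point[OF densX cR cH eps] by blast
    define M' where "M' = insert (f0, x) M"
    have "Ok M'"
    proof -
      have a: "Q M' d y"
        if "(d,y) \<in> M'" for d y
      proof (cases "(d,y) = (f0,x)")
        case True
        then show ?thesis using x below by (auto simp: H_def M'_def Q_def)
      next
        case False
        then have "(d,y) \<in> M" using that by (auto simp: M'_def)
        then show ?thesis using M1 by (auto simp: M'_def Q_def)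
      qed
      have b: "R d y d' y'"
        if dy: "(d,y) \<in> M'" "(d',y') \<in> M'" for d y d' y'
      proof -
        have f0M: "(f0, z) \<notin> M" for z using f0B by (auto simp: B_def)
        consider "(d,y) = (f0,x)" "(d',y') = (f0,x)" | "(d,y) = (f0,x)" "(d',y') \<in> M"
          | "(d,y) \<in> M" "(d',y') = (f0,x)" | "(d,y) \<in> M" "(d',y') \<in> M"
          using dy by (auto simp: M'_def)
        then show ?thesis
        proof cases
          case 1 then show ?thesis by (simp add: R_def)
        next
          case 2
          then have "d \<noteq> d'" using f0M by auto
          moreover have "1 - \<epsilon> \<le> norm (y - y')" using 2 x(2) by auto
          ultimately show ?thesis unfolding R_def by blast
        next
          case 3
          then have "d \<noteq> d'" using f0M by auto
          moreover have "1 - \<epsilon> \<le> norm (y' - y)" using 3 x(2) by auto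
          then have "1 - \<epsilon> \<le> norm (y - y')" by (simp add: norm_minus_commute)
          ultimately show ?thesis unfolding R_def by blast
        next
          case 4 then show ?thesis using M2 unfolding R_def by blast
        qed
      qed
      show ?thesis by (rule OkI) (use a b in blast)+
    qed
    moreover have "M \<subseteq> M'" by (auto simp: M'_def)
    ultimately have "M' = M" using Mmax by blast
    then have "f0 \<in> Domain M" by (auto simp: M'_def)
    then show False using f0B by (simp add: B_def)
  qed
  define g where "g d = (SOME x. (d,x) \<in> M)" for d
  have gM: "(d, g d) \<in> M" for d
    using domM unfolding g_def by (metis DomainE UNIV_I someI_ex)
  have gu: "x = g d" if "(d,x) \<in> M" for d x using M2(2)[OF that gM] by blast
  have gsep: "1 - \<epsilon> \<le> norm (g d - g d')" if "d \<noteq> d'" for d d'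
    using M2(1)[OF gM gM that] .
  have ginj: "inj g"
  proof (rule injI)
    fix d d' assume "g d = g d'"
    then show "d = d'" using gsep eps by force
  qed
  define S where "S = range g"
  have Sball: "S \<subseteq> cball 0 1" using M1(1)[OF gM] by (auto simp: S_def)
  have cardS: "|S| =o omega1"
  proof -
    have "bij_betw g UNIV S" using ginj by (simp add: S_def bij_betw_def)
    then have "|UNIV :: ('a \<Rightarrow>\<^sub>L real) set| =o |S|" by (rule iffD1[OF card_of_ordIso, OF exI])
    then have "|S| =o W" unfolding W_def by (rule ordIso_symmetric)
    then show ?thesis by (rule ordIso_transitive[OF _ Wiso])
  qed
  have over: "closure (span L) = UNIV" if L: "L \<subseteq> S" "|L| =o |S|" for L
  proof (rule ccontr)
    assume ne: "closure (span L) \<noteq> UNIV"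
    then obtain x0 where x0: "x0 \<notin> closure (span L)" by blast
    obtain f :: "'a \<Rightarrow>\<^sub>L real" where f: "\<And>z. z \<in> closure (span L) \<Longrightarrow> blinfun_apply f z = 0" "blinfun_apply f x0 = 1"
      using hahn_banach_sub[OF subspace_closure_sub[OF subspace_span] closed_closure x0] by blast
    have fne: "f \<noteq> 0" using f(2) by auto
    have "L \<subseteq> g ` under W f"
    proof
      fix x assume xL: "x \<in> L"
      then obtain d where xd: "x = g d" using L(1) by (auto simp: S_def)
      have "x \<in> closure (span L)" using xL closure_subset span_base by blast
      then have fx: "blinfun_apply f x = 0" using f(1) by blast
      have "f \<notin> underS W d" using M1(2)[OF gM, of f d] fne fx xd by blast
      then have "(d, f) \<in> W"
        using tot[of d f] tot[of f f] by (cases "d = f") (auto simp: underS_def)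
      then show "x \<in> g ` under W f" using xd by (auto simp: under_def)
    qed
    moreover have "under W f \<subseteq> insert f (underS W f)" by (auto simp: under_def underS_def)
    then have "countable (under W f)" using cntU countable_subset by (metis countable_insert)
    ultimately have "countable L" using countable_subset by blast
    moreover have "|L| =o omega1" by (rule ordIso_transitive[OF L(2) cardS])
    then have "omega1 \<le>o |L|" by (rule ordIso_imp_ordLeq[OF ordIso_symmetric])
    ultimately show False using uncountable_of_ge by blast
  qed
  have "overcomplete omega1 S"
    unfolding overcomplete_def card_eq_def using cardS over by blast
  moreover have "\<forall>x\<in>S. \<forall>y\<in>S. x \<noteq> y \<longrightarrow> norm (x - y) \<ge> 1 - \<epsilon>"
  proof (intro ballI impI)
    fix x y assume xy: "x \<in> S" "y \<in> S" "x \<noteq> y"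
    obtain d where xd: "x = g d" using xy(1) unfolding S_def by blast
    obtain d' where yd: "y = g d'" using xy(2) unfolding S_def by blast
    have "d \<noteq> d'" using xy(3) xd yd by blast
    then show "norm (x - y) \<ge> 1 - \<epsilon>" using gsep xd yd by simp
  qed
  ultimately show ?thesis using Sball by blast
qed


theorem proposition4p3:
  assumes CH: "card_eq (UNIV :: real set) omega1"
    and densX: "dens_is (UNIV :: 'a::banach set) omega1"
    and densXstar: "dens_is (UNIV :: ('a \<Rightarrow>\<^sub>L real) set) omega1"
    and eps: "\<epsilon> > (0::real)"
  shows "\<exists>S :: 'a set. S \<subseteq> cball 0 1 \<and> overcomplete omega1 S \<and>
           (\<forall>x\<in>S. \<forall>y\<in>S. x \<noteq> y \<longrightarrow> norm (x - y) \<ge> 1 - \<epsilon>)"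
proof -
  define e where "e = min \<epsilon> (1/2)"
  have e: "0 < e" "e < 1" using eps by (auto simp: e_def)
  obtain S :: "'a set" where S: "S \<subseteq> cball 0 1" "overcomplete omega1 S"
      "\<forall>x\<in>S. \<forall>y\<in>S. x \<noteq> y \<longrightarrow> norm (x - y) \<ge> 1 - e"
    using main_lt1[OF CH densX densXstar e] by blast
  have "1 - \<epsilon> \<le> 1 - e" by (simp add: e_def)
  then have "\<forall>x\<in>S. \<forall>y\<in>S. x \<noteq> y \<longrightarrow> norm (x - y) \<ge> 1 - \<epsilon>" using S(3) by force
  then show ?thesis using S(1,2) by blast
qed

end
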